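(* Let $F=(n_F)_{n\ge0}$ be the sequence of natural numbers, $n_F=n$ for $n\ge1$. Then for all integers $k,n$ with $0\le k<n$, the layer $\langle\Phi_{k+1}\to\Phi_n\rangle$ of the cobweb poset of $F$ (which has $m=n-k$ levels) admits at least one tiling by blocks of type $\sigma P_m$.
   Context: Notation: $n_F\equiv F_n$. For a sequence $F=(n_F)_{n\ge0}$ of nonnegative integers, the cobweb poset of $F$ has, for each $s\ge1$, a level $\Phi_s$ consisting of $s_F$ distinct vertices (levels pairwise disjoint), plus a root level $\Phi_0$ with one vertex; for $x\in\Phi_i$, $y\in\Phi_j$ one has $x<y$ iff $i<j$. For $1\le a\le b$, the layer $\langle\Phi_a\to\Phi_b\rangle$ is the subposet on $\Phi_a\cup\dots\cup\Phi_b$; it has $m=b-a+1$ levels, and its maximal chains are exactly the tuples $(x_a,\dots,x_b)$ with $x_j\in\Phi_j$, i.e. the set $\Phi_a\times\dots\times\Phi_b$. For a permutation $\sigma$ of $\{1,\dots,m\}$, a block of type $\sigma P_m$ in this layer is the subposet induced on $V_a\cup\dots\cup V_b$ where $V_{a-1+i}\subseteq\Phi_{a-1+i}$ and $|V_{a-1+i}|=\sigma(i)_F$ for $i=1,\dots,m$ (a copy of the prime cobweb poset $P_m$, whose levels have sizes $1_F,\dots,m_F$, with its levels permuted by $\sigma$); its maximal chains form the set $V_a\times\dots\times V_b$. A tiling of the layer by blocks of type $\sigma P_m$ is a finite family of such blocks ($\sigma$ may vary from block to block) that are pairwise max-disjoint (no two share a maximal chain) and together contain every maximal chain of the layer; equivalently,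 the sets $V_a\times\dots\times V_b$ of the blocks partition $\Phi_a\times\dots\times\Phi_b$. *)

theory Defs
  imports "HOL-Library.FuncSet"
begin

text \<open>Cobweb poset of a sequence F: level s (s \<ge> 1) is modelled as the vertex set
  {0..<F s}, tagged implicitly by its level index s. Maximal chains of the layer
  from level a to level b are the tuples x with x j in level j, i.e. the
  extensional functions in PiE {a..b} (cobweb_level F).\<close>

definition cobweb_level :: "(nat \<Rightarrow> nat) \<Rightarrow> nat \<Rightarrow> nat set" where
  "cobweb_level F s = {0..<F s}"

definition layer_chains :: "(nat \<Rightarrow> nat) \<Rightarrow> nat \<Rightarrow> nat \<Rightarrow> (nat \<Rightarrow> nat) set" where
  "layer_chains F a b = PiE {a..b} (cobweb_level F)"

definition is_block :: "(nat \<Rightarrow> nat) \<Rightarrow> nat \<Rightarrow> nat \<Rightarrow> (nat \<Rightarrow> nat set) \<Rightarrow> bool" where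
  "is_block F a b V \<longleftrightarrow>
     (\<forall>j\<in>{a..b}. V j \<subseteq> cobweb_level F j) \<and>
     (\<forall>j. j \<notin> {a..b} \<longrightarrow> V j = {}) \<and>
     (\<exists>\<sigma>. bij_betw \<sigma> {1..b-a+1} {1..b-a+1} \<and>
          (\<forall>i\<in>{1..b-a+1}. card (V (a - 1 + i)) = F (\<sigma> i)))"

definition block_chains :: "nat \<Rightarrow> nat \<Rightarrow> (nat \<Rightarrow> nat set) \<Rightarrow> (nat \<Rightarrow> nat) set" where
  "block_chains a b V = PiE {a..b} V"

definition is_tiling :: "(nat \<Rightarrow> nat) \<Rightarrow> nat \<Rightarrow> nat \<Rightarrow> (nat \<Rightarrow> nat set) set \<Rightarrow> bool" where
  "is_tiling F a b T \<longleftrightarrow>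
     finite T \<and>
     (\<forall>V\<in>T. is_block F a b V) \<and>
     (\<forall>V\<in>T. \<forall>W\<in>T. V \<noteq> W \<longrightarrow> block_chains a b V \<inter> block_chains a b W = {}) \<and>
     (\<Union>V\<in>T. block_chains a b V) = layer_chains F a b"

end

theory Submission
  imports Defs
begin

definition blk :: "nat set \<Rightarrow> (nat \<Rightarrow> nat set) \<Rightarrow> (nat \<Rightarrow> nat set) \<Rightarrow> bool" where
  "blk I L V \<longleftrightarrow> (\<forall>j\<in>I. V j \<subseteq> L j) \<and> (\<forall>j. j \<notin> I \<longrightarrow> V j = {}) \<and>
     bij_betw (\<lambda>j. card (V j)) I {1..card I}"

definition tiles :: "nat set \<Rightarrow> (nat \<Rightarrow> nat set) \<Rightarrow> (nat \<Rightarrow> nat set) set \<Rightarrow> bool" where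
  "tiles I L T \<longleftrightarrow> finite T \<and> (\<forall>V\<in>T. blk I L V) \<and>
     (\<forall>V\<in>T. \<forall>W\<in>T. V \<noteq> W \<longrightarrow> PiE I V \<inter> PiE I W = {}) \<and>
     (\<Union>V\<in>T. PiE I V) = PiE I L"

lemma base_tiles:
  assumes "bij_betw (\<lambda>j. card (L j)) I {1..card I}"
  shows "tiles I L {\<lambda>j. if j \<in> I then L j else {}}"
proof -
  have b: "bij_betw (\<lambda>j. card (if j \<in> I then L j else {})) I {1..card I}"
    using assms by (rule bij_betw_cong[THEN iffD1, rotated]) auto
  have "PiE I (\<lambda>j. if j \<in> I then L j else {}) = PiE I L"
    by (rule PiE_cong) auto
  then show ?thesis using b unfolding tiles_def blk_def by auto
qed

lemma PiE_upd_iff: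
  assumes "p \<in> I"
  shows "x \<in> PiE I (L(p:=S)) \<longleftrightarrow> x \<in> extensional I \<and> x p \<in> S \<and> (\<forall>i\<in>I-{p}. x i \<in> L i)"
proof -
  have "(\<forall>i\<in>I. x i \<in> (L(p:=S)) i) \<longleftrightarrow> x p \<in> S \<and> (\<forall>i\<in>I-{p}. x i \<in> L i)"
    using assms by (metis Diff_iff fun_upd_apply singletonD singletonI)
  then show ?thesis unfolding PiE_iff by blast
qed

lemma split_tiles:
  assumes t1: "tiles I (L(p:=A)) T1" and t2: "tiles I (L(p:=B)) T2"
    and p: "p \<in> I" and d: "A \<inter> B = {}"
  shows "tiles I (L(p:=A\<union>B)) (T1 \<union> T2)"
proof -
  have bl1: "blk I (L(p:=A\<union>B)) V" if "V \<in> T1" for V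
  proof -
    have "blk I (L(p:=A)) V" using t1 that unfolding tiles_def by auto
    then show ?thesis unfolding blk_def by (auto split: if_splits)
  qed
  have bl2: "blk I (L(p:=A\<union>B)) V" if "V \<in> T2" for V
  proof -
    have "blk I (L(p:=B)) V" using t2 that unfolding tiles_def by auto
    then show ?thesis unfolding blk_def by (auto split: if_splits)
  qed
  have bl: "\<forall>V\<in>T1 \<union> T2. blk I (L(p:=A\<union>B)) V" using bl1 bl2 by blast
  have cross: "PiE I V \<inter> PiE I W = {}" if "V \<in> T1" "W \<in> T2" for V W
  proof -
    have "blk I (L(p:=A)) V" using t1 that unfolding tiles_def by auto
    then have VA: "V p \<subseteq> A" using p unfolding blk_def by force
    have "blk I (L(p:=B)) W" using t2 that unfolding tiles_def by auto
    then have WB: "W p \<subseteq> B" using p unfolding blk_def by force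
    show ?thesis
    proof (rule ccontr)
      assume "PiE I V \<inter> PiE I W \<noteq> {}"
      then obtain x where "x \<in> PiE I V" "x \<in> PiE I W" by blast
      then have "x p \<in> V p" "x p \<in> W p" using p by (auto simp: PiE_iff)
      then show False using VA WB d by blast
    qed
  qed
  have dis: "\<forall>V\<in>T1 \<union> T2. \<forall>W\<in>T1 \<union> T2. V \<noteq> W \<longrightarrow> PiE I V \<inter> PiE I W = {}"
    using t1 t2 cross unfolding tiles_def by blast
  have un: "PiE I (L(p:=A\<union>B)) = PiE I (L(p:=A)) \<union> PiE I (L(p:=B))"
    by (rule set_eqI) (simp only: Un_iff PiE_upd_iff[OF p], blast)
  show ?thesis using bl dis un t1 t2 unfolding tiles_def by auto
qed

lemma ext_tiles:
  assumes t: "tiles I L T" and p: "p \<notin> I" and fI: "finite I"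
    and cA: "card A = Suc (card I)"
  shows "tiles (insert p I) (L(p:=A)) ((\<lambda>V. V(p:=A)) ` T)"
proof -
  have bl: "blk (insert p I) (L(p:=A)) (V(p:=A))" if "V \<in> T" for V
  proof -
    have b0: "blk I L V" using t that unfolding tiles_def by auto
    have "bij_betw (\<lambda>j. card (V j)) I {1..card I} = bij_betw (\<lambda>j. card ((V(p:=A)) j)) I {1..card I}"
      by (rule bij_betw_cong) (use p in auto)
    then have "bij_betw (\<lambda>j. card ((V(p:=A)) j)) I {1..card I}"
      using b0 unfolding blk_def by simp
    moreover have "{1..card I} \<union> {Suc (card I)} = {1..Suc (card I)}" by auto
    ultimately have "bij_betw (\<lambda>j. card ((V(p:=A)) j)) (I \<union> {p}) {1..Suc (card I)}"
      using notIn_Un_bij_betw3[of p I "\<lambda>j. card ((V(p:=A)) j)" "{1..card I}"] p cA by auto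
    then show ?thesis using b0 p fI unfolding blk_def by auto
  qed
  have dis: "PiE (insert p I) (V(p:=A)) \<inter> PiE (insert p I) (W(p:=A)) = {}"
    if "V \<in> T" "W \<in> T" "V(p:=A) \<noteq> W(p:=A)" for V W
  proof (rule ccontr)
    assume "PiE (insert p I) (V(p:=A)) \<inter> PiE (insert p I) (W(p:=A)) \<noteq> {}"
    then obtain x where x: "x \<in> PiE (insert p I) (V(p:=A))" "x \<in> PiE (insert p I) (W(p:=A))" by blast
    have "V \<noteq> W" using that by auto
    moreover have "x(p:=undefined) \<in> PiE I V" "x(p:=undefined) \<in> PiE I W"
      using x p by (auto simp: PiE_iff extensional_def split: if_splits)
    ultimately show False using t that unfolding tiles_def by blast
  qed
  have un: "(\<Union>V\<in>T. PiE (insert p I) (V(p:=A))) = PiE (insert p I) (L(p:=A))"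
  proof
    show "(\<Union>V\<in>T. PiE (insert p I) (V(p:=A))) \<subseteq> PiE (insert p I) (L(p:=A))"
    proof
      fix x assume "x \<in> (\<Union>V\<in>T. PiE (insert p I) (V(p:=A)))"
      then obtain V where V: "V \<in> T" "x \<in> PiE (insert p I) (V(p:=A))" by blast
      have "\<forall>j\<in>I. V j \<subseteq> L j" using t V(1) unfolding tiles_def blk_def by auto
      then show "x \<in> PiE (insert p I) (L(p:=A))" using V(2)
        by (simp only: PiE_upd_iff[OF insertI1]) (use p in auto)
    qed
  next
    show "PiE (insert p I) (L(p:=A)) \<subseteq> (\<Union>V\<in>T. PiE (insert p I) (V(p:=A)))"
    proof
      fix x assume x: "x \<in> PiE (insert p I) (L(p:=A))"
      then have "x(p:=undefined) \<in> PiE I L" using p by (auto simp: PiE_iff extensional_def)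
      then obtain V where V: "V \<in> T" "x(p:=undefined) \<in> PiE I V" using t unfolding tiles_def by blast
      have "x \<in> PiE (insert p I) (V(p:=A))" using V(2) x p
        by (auto simp: PiE_iff extensional_def split: if_splits)
      then show "x \<in> (\<Union>V\<in>T. PiE (insert p I) (V(p:=A)))" using V(1) by blast
    qed
  qed
  show ?thesis unfolding tiles_def
    using t bl dis un unfolding tiles_def by auto
qed

lemma main_tiles:
  "finite I \<Longrightarrow> card I = m \<Longrightarrow> bij_betw (\<lambda>j. card (L j)) I {k+1..k+m} \<Longrightarrow> \<exists>T. tiles I L T"
proof (induction m arbitrary: k I L)
  case 0
  then show ?case using base_tiles[of L I] by auto
next
  case (Suc m)
  note outer = Suc.IH
  show ?case using Suc.prems
  proof (induction k arbitrary: L)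
    case 0
    then show ?case using base_tiles[of L I] by auto
  next
    case (Suc k)
    let ?c = "\<lambda>j. card (L j)"
    have "Suc k + Suc m \<in> ?c ` I" using Suc.prems(3) unfolding bij_betw_def by auto
    then obtain p where p: "p \<in> I" "card (L p) = Suc k + Suc m" by auto
    then obtain A where A: "A \<subseteq> L p" "card A = Suc m" "finite A"
      using obtain_subset_with_card_n[of "Suc m" "L p"] by auto
    have fL: "finite (L p)" by (rule card_ge_0_finite) (simp add: p)
    define B where "B = L p - A"
    have cB: "card B = Suc k" unfolding B_def using A fL p by (simp add: card_Diff_subset)
    have bD: "bij_betw ?c (I - {p}) ({Suc k+1..Suc k + Suc m} - {Suc k + Suc m})"
      using bij_betw_DiffI[OF Suc.prems(3), of "{p}" "{Suc k + Suc m}"] p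
      by (auto simp: bij_betw_def)
    have e1: "{Suc k+1..Suc k + Suc m} - {Suc k + Suc m} = {Suc k+1..Suc k+m}" by auto
    have bI': "bij_betw ?c (I - {p}) {Suc k+1..Suc k+m}" using bD e1 by simp
    have cI': "card (I - {p}) = m" using Suc.prems p by simp
    obtain T1 where T1: "tiles (I - {p}) L T1"
      using outer[OF _ cI' bI'] Suc.prems(1) by auto
    have "tiles (insert p (I - {p})) (L(p:=A)) ((\<lambda>V. V(p:=A)) ` T1)"
      by (rule ext_tiles[OF T1]) (use A cI' Suc.prems(1) in auto)
    moreover have "insert p (I - {p}) = I" using p by auto
    ultimately have tA: "tiles I (L(p:=A)) ((\<lambda>V. V(p:=A)) ` T1)" by simp
    let ?d = "\<lambda>j. card ((L(p:=B)) j)"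
    have "bij_betw ?d (I - {p}) {Suc k+1..Suc k+m}"
      using bI' by (rule bij_betw_cong[THEN iffD1, rotated]) auto
    then have "bij_betw ?d ((I - {p}) \<union> {p}) ({Suc k+1..Suc k+m} \<union> {?d p})"
      using notIn_Un_bij_betw3[of p "I - {p}" ?d "{Suc k+1..Suc k+m}"] cB by auto
    moreover have "(I - {p}) \<union> {p} = I" using p by auto
    moreover have "{Suc k+1..Suc k+m} \<union> {?d p} = {k+1..k+Suc m}" using cB by auto
    ultimately have bB: "bij_betw ?d I {k+1..k+Suc m}" by simp
    obtain T2 where tB: "tiles I (L(p:=B)) T2" using Suc.IH[OF _ _ bB] Suc.prems by blast
    have "tiles I (L(p:=A\<union>B)) (((\<lambda>V. V(p:=A)) ` T1) \<union> T2)"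
      by (rule split_tiles[OF tA tB p(1)]) (auto simp: B_def)
    moreover have "A \<union> B = L p" using A unfolding B_def by auto
    then have "L(p:=A\<union>B) = L" by simp
    ultimately show ?case by auto
  qed
qed

theorem theorem1:
  fixes k n :: nat
  assumes "k < n"
  shows "\<exists>T. is_tiling (\<lambda>s. s) (k + 1) n T"
proof -
  let ?I = "{k+1..n}"
  let ?L = "cobweb_level (\<lambda>s. s)"
  have cI: "card ?I = n - k" by simp
  have "bij_betw (\<lambda>j. card (?L j)) ?I {k+1..k+(n-k)}"
    using assms by (simp add: cobweb_level_def bij_betw_def inj_on_def)
  then obtain T where T: "tiles ?I ?L T" using main_tiles[OF _ cI] by auto
  have blk: "is_block (\<lambda>s. s) (k+1) n V" if "V \<in> T" for V
  proof -
    have b: "blk ?I ?L V" using T that unfolding tiles_def by auto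
    have bc: "bij_betw (\<lambda>j. card (V j)) ?I {1..n-k}" using b cI unfolding blk_def by simp
    have "x \<in> (\<lambda>i. k+i) ` {1..n-k}" if "x \<in> ?I" for x
      using that by (intro image_eqI[of _ _ "x-k"]) auto
    then have sh: "bij_betw (\<lambda>i. k + i) {1..n-k} ?I"
      using assms by (auto simp: bij_betw_def inj_on_def)
    have "bij_betw ((\<lambda>j. card (V j)) \<circ> (\<lambda>i. k + i)) {1..n-k} {1..n-k}"
      using bij_betw_trans[OF sh bc] .
    moreover have "n - (k+1) + 1 = n - k" using assms by simp
    ultimately show ?thesis using b assms unfolding is_block_def blk_def
      by (intro conjI; (rule exI[of _ "\<lambda>i. card (V (k + i))"])?) (auto simp: comp_def)
  qed
  have "is_tiling (\<lambda>s. s) (k + 1) n T"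
    using T blk unfolding is_tiling_def tiles_def block_chains_def layer_chains_def by auto
  then show ?thesis by blast
qed

end
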